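(* Let $c>0$ and $\eta_0>0$. For measurable complex-valued functions $z_1,z_2$ on $\mathbb{R}$ with $\sup_{\omega\in\mathbb{R},i=1,2}|z_i(\omega)|\le1$, write $z=(z_1,z_2)$ and define on $\mathbb{R}_+\times\mathbb{R}$ $$\Psi_z(\tilde\lambda,\omega)=\frac{z_1(\omega)}{(c+i\omega+\tilde\lambda)(c+i\omega+\tilde\lambda-\tilde\lambda z_2(\omega))}.$$ Then: (i) the function $\tilde\lambda\mapsto\int_{-\infty}^\infty\Psi_z(\tilde\lambda,\omega)d\omega$ is continuously differentiable on $\mathbb{R}_+$ and its derivative is bounded over $\tilde\lambda\in[0,\eta_0]$ by a bound independent of $z$; (ii) there exists $K>0$ depending only on $c$ and $\eta_0$ such that for any $W\ge1$ or $W=\infty$ and any $\tilde z=(\tilde z_1,\tilde z_2)$ also satisfying $\sup_{\omega,i}|\tilde z_i(\omega)|\le1$, $$\sup_{\tilde\lambda\in[0,\eta_0]}\Big|\int\Psi_z(\tilde\lambda,\omega)d\omega-\int\Psi_{\tilde z}(\tilde\lambda,\omega)d\omega\Big|\le K\Big(\max_{i=1,2}\sup_{\omega\in[-W,W]}|z_i(\omega)-\tilde z_i(\omega)|+\frac1W\Big).$$ *)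

theory Defs
  imports "HOL-Analysis.Analysis"
begin

definition Psi :: "real \<Rightarrow> (real \<Rightarrow> complex) \<Rightarrow> (real \<Rightarrow> complex) \<Rightarrow> real \<Rightarrow> real \<Rightarrow> complex" where
  "Psi c z1 z2 lam w =
     z1 w / ((complex_of_real c + \<i> * complex_of_real w + complex_of_real lam) *
             (complex_of_real c + \<i> * complex_of_real w + complex_of_real lam
               - complex_of_real lam * z2 w))"

definition PsiInt :: "real \<Rightarrow> (real \<Rightarrow> complex) \<Rightarrow> (real \<Rightarrow> complex) \<Rightarrow> real \<Rightarrow> complex" where
  "PsiInt c z1 z2 lam = integral\<^sup>L lborel (\<lambda>w. Psi c z1 z2 lam w)"

definition admissible :: "(real \<Rightarrow> complex) \<Rightarrow> (real \<Rightarrow> complex) \<Rightarrow> bool" where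
  "admissible z1 z2 \<longleftrightarrow>
     z1 \<in> borel_measurable borel \<and> z2 \<in> borel_measurable borel \<and>
     (\<forall>w. norm (z1 w) \<le> 1 \<and> norm (z2 w) \<le> 1)"

end

theory Submission
  imports Defs "HOL-Probability.Sinc_Integral"
begin

lemma integrable_g: "integrable lborel (\<lambda>x::real. inverse (1 + x^2))"
  using integrable_inverse_1_plus_square
  by (simp add: set_integrable_def)

lemma normD1:
  fixes c lam w :: real
  assumes "c > 0" "lam \<ge> 0"
  shows "sqrt (c^2 + w^2) \<le> norm (complex_of_real c + \<i> * complex_of_real w + complex_of_real lam)"
proof -
  have "complex_of_real c + \<i> * complex_of_real w + complex_of_real lam = Complex (c + lam) w"
    by (simp add: complex_eq_iff)
  moreover have "sqrt (c^2 + w^2) \<le> sqrt ((c+lam)^2 + w^2)"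
    using assms by (intro real_sqrt_le_mono) (simp add: power2_eq_square mult_mono)
  ultimately show ?thesis by (simp add: cmod_def)
qed

lemma normA:
  fixes c w :: real
  shows "norm (complex_of_real c + \<i> * complex_of_real w) = sqrt (c^2 + w^2)"
proof -
  have "complex_of_real c + \<i> * complex_of_real w = Complex c w"
    by (simp add: complex_eq_iff)
  then show ?thesis by (simp add: cmod_def)
qed

lemma normD2:
  fixes c lam w L :: real and z :: complex
  assumes "c > 0" "lam \<ge> 0" "lam \<le> L" "norm z \<le> 1"
  shows "c * sqrt (c^2 + w^2) / (c + 2*L) \<le> norm (complex_of_real c + \<i> * complex_of_real w + complex_of_real lam - complex_of_real lam * z)"
proof -
  let ?D = "complex_of_real c + \<i> * complex_of_real w + complex_of_real lam - complex_of_real lam * z"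
  let ?r = "sqrt (c^2 + w^2)"
  have "Re ?D = c + lam - lam * Re z" by simp
  moreover have "lam * Re z \<le> lam"
    using assms abs_Re_le_cmod[of z] by (metis abs_le_D1 mult_left_le order_trans)
  ultimately have "c \<le> Re ?D" by linarith
  then have h1: "c \<le> norm ?D" using abs_Re_le_cmod[of ?D] by linarith
  have eq: "?D = (complex_of_real c + \<i> * complex_of_real w) + complex_of_real lam * (1 - z)"
    by (simp add: algebra_simps)
  have n2: "norm (complex_of_real lam * (1 - z)) \<le> 2 * lam"
  proof -
    have "norm (1 - z) \<le> 2" using norm_triangle_ineq4[of 1 z] assms by simp
    then show ?thesis using assms mult_left_mono[of "cmod (1-z)" 2 lam] by (simp add: norm_mult mult.commute)
  qed
  have tri: "norm (complex_of_real c + \<i> * complex_of_real w) - norm (complex_of_real lam * (1 - z))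
     \<le> norm ((complex_of_real c + \<i> * complex_of_real w) + complex_of_real lam * (1 - z))"
    by (rule norm_diff_ineq)
  have h2: "?r - 2 * lam \<le> norm ?D"
    using tri n2 unfolding normA eq[symmetric] by linarith
  have "c * (?r - 2*lam) \<le> c * norm ?D" using h2 assms by (simp add: mult_left_mono)
  moreover have "2*lam*c \<le> 2*lam * norm ?D" using h1 assms by (simp add: mult_left_mono)
  moreover have "2*lam*norm ?D \<le> 2*L*norm ?D" using assms by (simp add: mult_right_mono)
  ultimately have "c * ?r \<le> norm ?D * (c + 2*L)" by (simp add: algebra_simps)
  then show ?thesis using assms by (simp add: divide_le_eq)
qed

definition E :: "real \<Rightarrow> real \<Rightarrow> real \<Rightarrow> complex \<Rightarrow> complex" where
  "E c w lam z = complex_of_real c + \<i> * complex_of_real w + complex_of_real lam - complex_of_real lam * z"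

definition Qf :: "real \<Rightarrow> (real \<Rightarrow> complex) \<Rightarrow> (real \<Rightarrow> complex) \<Rightarrow> real \<Rightarrow> real \<Rightarrow> real \<Rightarrow> complex" where
  "Qf c z1 z2 lam mu w = - z1 w * ((complex_of_real c + \<i> * complex_of_real w) * (2 - z2 w) + (1 - z2 w) * complex_of_real (lam + mu))
      / (E c w lam 0 * E c w lam (z2 w) * E c w mu 0 * E c w mu (z2 w))"

lemma Psi_E: "Psi c z1 z2 lam w = z1 w / (E c w lam 0 * E c w lam (z2 w))"
  by (simp add: Psi_def E_def)

lemma E_lower:
  assumes "c > 0" "lam \<ge> 0" "lam \<le> L" "norm z \<le> 1"
  shows "c * sqrt (c^2 + w^2) / (c + 2*L) \<le> norm (E c w lam z)"
  using normD2[OF assms] by (simp add: E_def)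

lemma E_nz:
  assumes "c > 0" "lam \<ge> 0" "norm z \<le> 1"
  shows "E c w lam z \<noteq> 0"
proof -
  have "0 < c * sqrt (c^2 + w^2) / (c + 2*lam)" using assms by (simp add: add_pos_nonneg)
  then show ?thesis using E_lower[OF assms(1,2) order_refl assms(3), of w] by auto
qed

lemma quot_alg:
  fixes X Y m N z :: complex
  assumes "X \<noteq> 0" "Y \<noteq> 0" "m \<noteq> 0" "X - Y = m * N"
  shows "(z / Y - z / X) / m = z * N / (X * Y)"
proof -
  have "(z / Y - z / X) / m = z * (X - Y) / (X * Y * m)"
    using assms by (simp add: field_simps)
  also have "\<dots> = (z * N) * m / ((X * Y) * m)" using assms(4) by (simp add: ac_simps)
  also have "\<dots> = z * N / (X * Y)" using assms(3) by simp
  finally show ?thesis .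
qed

lemma quot_eq:
  assumes "c > 0" "lam \<ge> 0" "mu \<ge> 0" "mu \<noteq> lam" "norm (z2 w) \<le> 1"
  shows "(Psi c z1 z2 mu w - Psi c z1 z2 lam w) / complex_of_real (mu - lam) = Qf c z1 z2 lam mu w"
proof -
  have n: "E c w lam 0 * E c w lam (z2 w) \<noteq> 0" "E c w mu 0 * E c w mu (z2 w) \<noteq> 0"
    using E_nz assms by auto
  have m: "complex_of_real (mu - lam) \<noteq> 0" using assms by simp
  have key: "E c w lam 0 * E c w lam (z2 w) - E c w mu 0 * E c w mu (z2 w) =
     complex_of_real (mu - lam) * (- ((complex_of_real c + \<i> * complex_of_real w) * (2 - z2 w) + (1 - z2 w) * complex_of_real (lam + mu)))"
    by (simp add: E_def algebra_simps)
  show ?thesis unfolding Psi_E Qf_def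
    using quot_alg[OF n m key, of "z1 w"] by (simp only: mult.assoc mult_minus_right mult_minus_left minus_divide_left)
qed

lemma prod4_lower:
  fixes a d1 d2 d3 d4 :: real
  assumes "0 \<le> a" "a \<le> d1" "a \<le> d2" "a \<le> d3" "a \<le> d4"
  shows "a^4 \<le> d1 * d2 * d3 * d4"
proof -
  have "a*a \<le> d1*d2" using assms by (meson mult_mono order_trans)
  moreover have "a*a \<le> d3*d4" using assms by (meson mult_mono order_trans)
  ultimately have "(a*a)*(a*a) \<le> (d1*d2)*(d3*d4)"
    using assms by (meson mult_mono mult_nonneg_nonneg order_trans)
  then show ?thesis by (simp add: power4_eq_xxxx ac_simps)
qed

lemma bound4:
  fixes z N d1 d2 d3 d4 :: complex
  assumes "norm z \<le> 1" "norm N \<le> \<alpha> * r" "0 < b" "0 < c" "c \<le> r"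
    "b*r \<le> norm d1" "b*r \<le> norm d2" "b*r \<le> norm d3" "b*r \<le> norm d4"
  shows "norm (z * N / (d1*d2*d3*d4)) \<le> \<alpha> / (b^4 * c) / r^2"
proof -
  have r: "r > 0" using assms by linarith
  have br: "b * r > 0" using assms r by simp
  have P: "(b*r)^4 \<le> norm d1 * norm d2 * norm d3 * norm d4"
    using prod4_lower[of "b*r"] assms br by (simp only: less_imp_le)
  have "norm (z * N / (d1*d2*d3*d4)) = norm z * norm N / (norm d1 * norm d2 * norm d3 * norm d4)"
    by (simp add: norm_mult norm_divide)
  also have "\<dots> \<le> (\<alpha> * r) / (b*r)^4"
  proof (rule frac_le)
    show "0 \<le> \<alpha> * r" using assms(2) norm_ge_zero order_trans by blast
    show "norm z * norm N \<le> \<alpha> * r"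
      using assms(1,2) by (meson mult_left_le_one_le norm_ge_zero order_trans)
    show "0 < (b*r)^4" using assms r by simp
  qed (use P in auto)
  also have "\<dots> = \<alpha> / (b^4 * r^3)" using r by (simp add: power_mult_distrib field_simps power4_eq_xxxx power3_eq_cube)
  also have "\<dots> \<le> \<alpha> / (b^4 * c) / r^2"
  proof -
    have a0: "\<alpha> \<ge> 0" using assms(2) r by (metis norm_ge_zero order_trans zero_le_mult_iff not_less less_le)
    have "b^4 * c * r^2 \<le> b^4 * r^3"
      using assms r by (simp add: power3_eq_cube power2_eq_square mult_right_mono)
    then have "\<alpha> / (b^4 * r^3) \<le> \<alpha> / (b^4 * c * r^2)"
      using a0 assms r by (intro divide_left_mono) auto
    then show ?thesis by simp
  qed
  finally show ?thesis .
qed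

lemma bound2:
  fixes z d1 d2 :: complex
  assumes "norm z \<le> \<delta>" "0 < b" "0 < r" "b*r \<le> norm d1" "b*r \<le> norm d2"
  shows "norm (z / (d1*d2)) \<le> \<delta> / b^2 / r^2"
proof -
  have br: "b * r > 0" using assms by simp
  have d0: "\<delta> \<ge> 0" using assms(1) norm_ge_zero[of z] by linarith
  have P: "(b*r)*(b*r) \<le> norm d1 * norm d2" using assms br by (meson less_le mult_mono order_trans)
  have "norm (z / (d1*d2)) = norm z / (norm d1 * norm d2)" by (simp add: norm_mult norm_divide)
  also have "\<dots> \<le> \<delta> / ((b*r)*(b*r))"
    by (rule frac_le) (use assms br P d0 in \<open>auto intro: mult_pos_pos\<close>)
  also have "\<dots> = \<delta> / b^2 / r^2" by (simp add: power2_eq_square)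
  finally show ?thesis .
qed

lemma bound3:
  fixes z d1 d2 d3 :: complex
  assumes "norm z \<le> \<delta>" "0 < b" "0 < c" "c \<le> r" "b*r \<le> norm d1" "b*r \<le> norm d2" "b*r \<le> norm d3"
  shows "norm (z / (d1*d2*d3)) \<le> \<delta> / (b^3 * c) / r^2"
proof -
  have r: "r > 0" using assms by linarith
  have br: "b * r > 0" using assms r by simp
  have d0: "\<delta> \<ge> 0" using assms(1) norm_ge_zero order_trans by blast
  have P: "(b*r)*(b*r)*(b*r) \<le> norm d1 * norm d2 * norm d3" using assms br
    by (meson less_le mult_mono mult_nonneg_nonneg order_trans)
  have "norm (z / (d1*d2*d3)) = norm z / (norm d1 * norm d2 * norm d3)" by (simp add: norm_mult norm_divide)
  also have "\<dots> \<le> \<delta> / ((b*r)*(b*r)*(b*r))"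
    by (rule frac_le) (use assms br P d0 in auto)
  also have "\<dots> = \<delta> / (b^3 * r^3)" by (simp add: power3_eq_cube ac_simps)
  also have "\<dots> \<le> \<delta> / (b^3 * c) / r^2"
  proof -
    have "b^3 * c * r^2 \<le> b^3 * r^3"
      using assms r by (simp add: power3_eq_cube power2_eq_square mult_right_mono)
    then have "\<delta> / (b^3 * r^3) \<le> \<delta> / (b^3 * c * r^2)"
      using d0 assms r by (intro divide_left_mono) auto
    then show ?thesis by simp
  qed
  finally show ?thesis .
qed

lemma r2_bound:
  fixes c w :: real assumes "c > 0"
  shows "1 / (sqrt (c^2 + w^2))^2 \<le> (1 / min (c^2) 1) * inverse (1 + w^2)"
proof -
  have s: "(sqrt (c^2 + w^2))^2 = c^2 + w^2" by simp
  have m: "min (c^2) 1 > 0" using assms by simp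
  have "min (c^2) 1 * (1 + w^2) \<le> c^2 + w^2"
  proof -
    have "min (c^2) 1 \<le> c^2" "min (c^2) 1 * w^2 \<le> w^2"
      by (auto simp: mult_left_le_one_le)
    then show ?thesis by (simp add: algebra_simps)
  qed
  then have "1 / (c^2 + w^2) \<le> 1 / (min (c^2) 1 * (1 + w^2))"
  proof (rule divide_left_mono)
    have "0 < c^2 + w^2" using assms by (simp add: add_pos_nonneg)
    moreover have "0 < min (c^2) 1 * (1 + w^2)" using m by (simp add: add_pos_nonneg)
    ultimately show "0 < (c^2 + w^2) * (min (c^2) 1 * (1 + w^2))" by simp
  qed auto
  then show ?thesis unfolding s using m by (simp add: divide_inverse mult.commute)
qed

definition bet :: "real \<Rightarrow> real \<Rightarrow> real" where "bet c L = c / (c + 2*L)"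
definition mm :: "real \<Rightarrow> real" where "mm c = 1 / min (c^2) 1"
definition CQ :: "real \<Rightarrow> real \<Rightarrow> real" where "CQ c L = (3 + 4*L/c) / (bet c L ^ 4 * c) * mm c"
definition CP :: "real \<Rightarrow> real \<Rightarrow> real" where "CP c L = 1 / bet c L ^ 2 * mm c"
definition CD :: "real \<Rightarrow> real \<Rightarrow> real" where "CD c L = (1 / bet c L ^ 2 + L / (bet c L ^ 3 * c)) * mm c"

lemma bet_pos: "c > 0 \<Longrightarrow> L \<ge> 0 \<Longrightarrow> bet c L > 0"
  by (simp add: bet_def add_pos_nonneg)
lemma mm_pos: "c > 0 \<Longrightarrow> mm c > 0"
  by (simp add: mm_def)

lemma E_lower':
  assumes "c > 0" "lam \<ge> 0" "lam \<le> L" "norm z \<le> 1"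
  shows "bet c L * sqrt (c^2 + w^2) \<le> norm (E c w lam z)"
  using E_lower[OF assms, of w] by (simp add: bet_def)

lemma r_ge_c: "c > 0 \<Longrightarrow> c \<le> sqrt (c^2 + w^2)"
  by (metis abs_of_pos le_add_same_cancel1 real_sqrt_abs real_sqrt_le_mono zero_le_power2)

lemma inv_r2: "c > 0 \<Longrightarrow> x \<ge> 0 \<Longrightarrow> x / (sqrt (c^2 + w^2))^2 \<le> x * mm c * inverse (1 + w^2)"
  using r2_bound[of c w] mult_left_mono[OF r2_bound[of c w], of x]
  by (simp add: mm_def divide_inverse mult.assoc)

lemma diff_alg:
  fixes X A B a b :: complex
  assumes "X \<noteq> 0" "A \<noteq> 0" "B \<noteq> 0"
  shows "a / (X * A) - b / (X * B) = (a - b) / (X * A) + b * (B - A) / (X * A * B)"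
  using assms by (simp add: field_simps)

lemma Q_bound:
  assumes c: "c > 0" and z: "norm (z1 w) \<le> 1" "norm (z2 w) \<le> 1"
    and l: "0 \<le> lam" "lam \<le> L" and m: "0 \<le> mu" "mu \<le> L"
  shows "norm (Qf c z1 z2 lam mu w) \<le> CQ c L * inverse (1 + w^2)"
proof -
  let ?r = "sqrt (c^2 + w^2)"
  let ?A = "complex_of_real c + \<i> * complex_of_real w"
  let ?N = "?A * (2 - z2 w) + (1 - z2 w) * complex_of_real (lam + mu)"
  have L0: "L \<ge> 0" using l by linarith
  have rc: "c \<le> ?r" using r_ge_c c .
  have n1: "norm (2 - z2 w) \<le> 3" using norm_triangle_ineq4[of 2 "z2 w"] z by simp
  have n2: "norm (1 - z2 w) \<le> 2" using norm_triangle_ineq4[of 1 "z2 w"] z by simp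
  have "norm ?N \<le> norm (?A * (2 - z2 w)) + norm ((1 - z2 w) * complex_of_real (lam + mu))"
    by (rule norm_triangle_ineq)
  also have "\<dots> \<le> ?r * 3 + 2 * (2 * L)"
  proof (rule add_mono)
    show "norm (?A * (2 - z2 w)) \<le> ?r * 3" unfolding norm_mult normA
      using n1 by (simp add: mult_left_mono)
    have "norm (complex_of_real (lam + mu)) = lam + mu" by (simp only: norm_of_real) (use l m in simp)
    then have "norm (complex_of_real (lam + mu)) \<le> 2 * L" using l m by linarith
    then show "norm ((1 - z2 w) * complex_of_real (lam + mu)) \<le> 2 * (2 * L)" unfolding norm_mult
      using n2 by (intro mult_mono) auto
  qed
  also have "\<dots> \<le> (3 + 4*L/c) * ?r"
  proof -
    have "4 * L \<le> 4 * L / c * ?r" using rc c L0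
      by (simp add: le_divide_eq mult.commute mult_left_mono)
    then show ?thesis by (simp add: algebra_simps)
  qed
  finally have nN: "norm ?N \<le> (3 + 4*L/c) * ?r" .
  have "norm (Qf c z1 z2 lam mu w) = norm ((- z1 w) * ?N / (E c w lam 0 * E c w lam (z2 w) * E c w mu 0 * E c w mu (z2 w)))"
    by (simp add: Qf_def)
  also have "\<dots> \<le> (3 + 4*L/c) / (bet c L ^ 4 * c) / ?r^2"
    by (rule bound4[OF _ nN bet_pos[OF c L0] c rc]) (use z c l m E_lower' in auto)
  also have "\<dots> \<le> CQ c L * inverse (1 + w^2)"
    using inv_r2[OF c, of "(3 + 4*L/c) / (bet c L ^ 4 * c)" w] bet_pos[OF c L0] c L0
    by (simp add: CQ_def)
  finally show ?thesis .
qed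

lemma Psi_bound:
  assumes c: "c > 0" and z: "norm (z1 w) \<le> 1" "norm (z2 w) \<le> 1"
    and l: "0 \<le> lam" "lam \<le> L"
  shows "norm (Psi c z1 z2 lam w) \<le> CP c L * inverse (1 + w^2)"
proof -
  let ?r = "sqrt (c^2 + w^2)"
  have L0: "L \<ge> 0" using l by linarith
  have rc: "c \<le> ?r" using r_ge_c c .
  have r0: "0 < ?r" using rc c by linarith
  have "norm (Psi c z1 z2 lam w) \<le> 1 / bet c L ^ 2 / ?r^2" unfolding Psi_E
    by (rule bound2[OF z(1) bet_pos[OF c L0] r0]) (use z c l rc E_lower' in auto)
  also have "\<dots> \<le> CP c L * inverse (1 + w^2)"
    using inv_r2[OF c, of "1 / bet c L ^ 2" w] bet_pos[OF c L0] c L0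
    by (simp add: CP_def)
  finally show ?thesis .
qed

lemma Psi_diff_bound:
  assumes c: "c > 0" and z: "norm (z1 w) \<le> 1" "norm (z2 w) \<le> 1"
    and y: "norm (y1 w) \<le> 1" "norm (y2 w) \<le> 1"
    and l: "0 \<le> lam" "lam \<le> L"
    and d: "norm (z1 w - y1 w) \<le> \<delta>" "norm (z2 w - y2 w) \<le> \<delta>"
  shows "norm (Psi c z1 z2 lam w - Psi c y1 y2 lam w) \<le> \<delta> * CD c L * inverse (1 + w^2)"
proof -
  let ?r = "sqrt (c^2 + w^2)"
  have L0: "L \<ge> 0" using l by linarith
  have rc: "c \<le> ?r" using r_ge_c c .
  have d0: "\<delta> \<ge> 0" using d norm_ge_zero[of "z1 w - y1 w"] by linarith
  have nz: "E c w lam 0 \<noteq> 0" "E c w lam (z2 w) \<noteq> 0" "E c w lam (y2 w) \<noteq> 0"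
    using E_nz c l z y by auto
  have eq: "Psi c z1 z2 lam w - Psi c y1 y2 lam w =
     (z1 w - y1 w) / (E c w lam 0 * E c w lam (z2 w)) +
     y1 w * (complex_of_real lam * (z2 w - y2 w)) / (E c w lam 0 * E c w lam (z2 w) * E c w lam (y2 w))"
  proof -
    have "E c w lam (y2 w) - E c w lam (z2 w) = complex_of_real lam * (z2 w - y2 w)"
      by (simp add: E_def algebra_simps)
    then show ?thesis unfolding Psi_E using diff_alg[OF nz] by simp
  qed
  have b1: "norm ((z1 w - y1 w) / (E c w lam 0 * E c w lam (z2 w))) \<le> \<delta> / bet c L ^ 2 / ?r^2"
    by (rule bound2[OF d(1) bet_pos[OF c L0]]) (use z c l rc E_lower' less_le_trans[OF c rc] in auto)
  have ny: "norm (y1 w * (complex_of_real lam * (z2 w - y2 w))) \<le> L * \<delta>"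
  proof -
    have "norm (y1 w * (complex_of_real lam * (z2 w - y2 w))) = norm (y1 w) * (lam * norm (z2 w - y2 w))"
      using l by (simp add: norm_mult)
    also have "\<dots> \<le> 1 * (L * \<delta>)"
      using y l d L0 by (intro mult_mono) auto
    finally show ?thesis by simp
  qed
  have b2: "norm (y1 w * (complex_of_real lam * (z2 w - y2 w)) / (E c w lam 0 * E c w lam (z2 w) * E c w lam (y2 w)))
      \<le> L * \<delta> / (bet c L ^ 3 * c) / ?r^2"
    by (rule bound3[OF ny bet_pos[OF c L0] c rc]) (use z y c l E_lower' in auto)
  have "norm (Psi c z1 z2 lam w - Psi c y1 y2 lam w) \<le> \<delta> / bet c L ^ 2 / ?r^2 + L * \<delta> / (bet c L ^ 3 * c) / ?r^2"
    unfolding eq by (rule norm_triangle_le) (use b1 b2 in linarith)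
  also have "\<dots> = (\<delta> * (1 / bet c L ^ 2 + L / (bet c L ^ 3 * c))) / ?r^2"
    by (simp only: add_divide_distrib distrib_left times_divide_eq_right mult_1_right mult.commute)
  also have "\<dots> \<le> \<delta> * CD c L * inverse (1 + w^2)"
    using inv_r2[OF c, of "\<delta> * (1 / bet c L ^ 2 + L / (bet c L ^ 3 * c))" w] bet_pos[OF c L0] c L0 d0
    by (simp add: CD_def mult.assoc)
  finally show ?thesis .
qed

lemma dom_conv_within:
  fixes g :: "real \<Rightarrow> real \<Rightarrow> complex" and x :: real and G :: "real \<Rightarrow> complex"
  assumes meas: "\<And>t. g t \<in> borel_measurable lborel" "G \<in> borel_measurable lborel"
    and w: "integrable lborel w"
    and bnd: "\<forall>\<^sub>F t in at x within S. \<forall>\<omega>. norm (g t \<omega>) \<le> w \<omega>"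
    and lim: "\<And>\<omega>. ((\<lambda>t. g t \<omega>) \<longlongrightarrow> G \<omega>) (at x within S)"
  shows "((\<lambda>t. integral\<^sup>L lborel (g t)) \<longlongrightarrow> integral\<^sup>L lborel G) (at x within S)"
proof (subst tendsto_at_iff_sequentially, intro allI impI)
  fix X :: "nat \<Rightarrow> real" assume X: "\<forall>i. X i \<in> S - {x}" "X \<longlonglongrightarrow> x"
  have fX: "filterlim X (at x within S) sequentially"
    using X by (auto simp: filterlim_at)
  from filterlim_iff[THEN iffD1, OF fX, rule_format, OF bnd] obtain N where
    N: "\<And>n. n \<ge> N \<Longrightarrow> \<forall>\<omega>. norm (g (X n) \<omega>) \<le> w \<omega>"
    by (auto simp: eventually_sequentially)
  show "((\<lambda>t. integral\<^sup>L lborel (g t)) \<circ> X) \<longlonglongrightarrow> integral\<^sup>L lborel G"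
    unfolding comp_def
  proof (rule LIMSEQ_offset[where k=N], rule integral_dominated_convergence[where w=w])
    show "G \<in> borel_measurable lborel" by (rule meas)
    show "\<And>i. g (X (i + N)) \<in> borel_measurable lborel" by (rule meas)
    show "integrable lborel w" by (rule w)
    show "AE \<omega> in lborel. (\<lambda>i. g (X (i + N)) \<omega>) \<longlonglongrightarrow> G \<omega>"
    proof (rule AE_I2)
      fix \<omega>
      have "(\<lambda>n. g (X n) \<omega>) \<longlonglongrightarrow> G \<omega>" by (rule filterlim_compose[OF lim fX])
      then show "(\<lambda>i. g (X (i + N)) \<omega>) \<longlonglongrightarrow> G \<omega>" by (rule LIMSEQ_ignore_initial_segment)
    qed
    show "\<And>i. AE \<omega> in lborel. norm (g (X (i + N)) \<omega>) \<le> w \<omega>"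
      using N by auto
  qed
qed

lemma vector_deriv_from_quot:
  fixes f :: "real \<Rightarrow> complex"
  assumes "((\<lambda>y. (f y - f x) / complex_of_real (y - x)) \<longlongrightarrow> D) (at x within S)"
  shows "(f has_vector_derivative D) (at x within S)"
  unfolding has_vector_derivative_def has_derivative_iff_norm
proof
  show "bounded_linear (\<lambda>h. h *\<^sub>R D)" by (rule bounded_linear_scaleR_left)
  have "((\<lambda>y. norm ((f y - f x) / complex_of_real (y - x) - D)) \<longlongrightarrow> 0) (at x within S)"
    using assms by (simp add: tendsto_norm_zero_iff LIM_zero_iff)
  moreover have "\<forall>\<^sub>F y in at x within S. norm ((f y - f x) / complex_of_real (y - x) - D) =
      norm (f y - f x - (y - x) *\<^sub>R D) / norm (y - x)"
  proof -
    have "norm ((f y - f x) / complex_of_real (y - x) - D) = norm (f y - f x - (y - x) *\<^sub>R D) / norm (y - x)"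
      if "y \<noteq> x" for y
    proof -
      have nz: "complex_of_real (y - x) \<noteq> 0" using that by simp
      have "(f y - f x) / complex_of_real (y - x) - D = (f y - f x - (y - x) *\<^sub>R D) / complex_of_real (y - x)"
        using nz by (simp add: field_simps scaleR_conv_of_real)
      then show ?thesis by (simp only: norm_divide norm_of_real real_norm_def)
    qed
    then show ?thesis unfolding eventually_at_filter by (intro always_eventually) blast
  qed
  ultimately show "((\<lambda>y. norm (f y - f x - (y - x) *\<^sub>R D) / norm (y - x)) \<longlongrightarrow> 0) (at x within S)"
    by (rule Lim_transform_eventually)
qed

definition gg :: "real \<Rightarrow> real" where "gg w = inverse (1 + w^2)"

lemma integrable_gg: "integrable lborel (\<lambda>w. C * gg w)"
  using integrable_g by (simp add: gg_def)

lemma meas_Psi: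
  assumes "z1 \<in> borel_measurable borel" "z2 \<in> borel_measurable borel"
  shows "(\<lambda>w. Psi c z1 z2 lam w) \<in> borel_measurable lborel"
proof -
  note [measurable] = assms
  show ?thesis unfolding Psi_def by measurable
qed

lemma meas_Qf:
  assumes "z1 \<in> borel_measurable borel" "z2 \<in> borel_measurable borel"
  shows "(\<lambda>w. Qf c z1 z2 lam mu w) \<in> borel_measurable lborel"
proof -
  note [measurable] = assms
  show ?thesis unfolding Qf_def E_def by measurable
qed

lemma tendsto_E[tendsto_intros]:
  "(f \<longlongrightarrow> l) F \<Longrightarrow> ((\<lambda>t. E c w (f t) z) \<longlongrightarrow> E c w l z) F"
  unfolding E_def by (intro tendsto_intros)

lemma tendsto_Qf:
  assumes "c > 0" "norm (z2 w) \<le> 1" "(f \<longlongrightarrow> a) F" "(h \<longlongrightarrow> b) F" "a \<ge> 0" "b \<ge> 0"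
  shows "((\<lambda>t. Qf c z1 z2 (f t) (h t) w) \<longlongrightarrow> Qf c z1 z2 a b w) F"
  unfolding Qf_def using assms E_nz[of c a 0 w] E_nz[of c a "z2 w" w] E_nz[of c b 0 w] E_nz[of c b "z2 w" w]
  by (intro tendsto_intros) auto

lemma ev_within:
  fixes lam :: real
  shows "\<forall>\<^sub>F mu in at lam within {0..}. 0 \<le> mu \<and> mu \<le> lam + 1 \<and> mu \<noteq> lam"
proof -
  have "\<forall>\<^sub>F mu in at lam within {0..}. mu < lam + 1"
    by (rule order_tendstoD(2)[OF tendsto_ident_at]) simp
  moreover have "\<forall>\<^sub>F mu in at lam within {0..}. 0 \<le> mu \<and> mu \<noteq> lam"
    unfolding eventually_at_filter by (intro always_eventually) auto
  ultimately show ?thesis by eventually_elim auto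
qed

lemma integrable_Psi:
  assumes c: "c > 0" and ad: "admissible z1 z2" and l: "0 \<le> lam"
  shows "integrable lborel (\<lambda>w. Psi c z1 z2 lam w)"
proof (rule Bochner_Integration.integrable_bound[OF integrable_gg[of "CP c lam"]])
  show "(\<lambda>w. Psi c z1 z2 lam w) \<in> borel_measurable lborel"
    using ad meas_Psi by (auto simp: admissible_def)
  have "CP c lam \<ge> 0" using c l bet_pos[OF c l] mm_pos[OF c] by (simp add: CP_def)
  then show "AE w in lborel. norm (Psi c z1 z2 lam w) \<le> norm (CP c lam * gg w)"
    using Psi_bound[OF c _ _ l order_refl] ad
    by (auto simp: admissible_def gg_def abs_mult)
qed

lemma part1:
  assumes c: "c > 0" and ad: "admissible z1 z2"
  shows "(\<forall>lam\<in>{0..}. (PsiInt c z1 z2 has_vector_derivative (\<integral>w. Qf c z1 z2 lam lam w \<partial>lborel)) (at lam within {0..}))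
     \<and> continuous_on {0..} (\<lambda>lam. \<integral>w. Qf c z1 z2 lam lam w \<partial>lborel)
     \<and> (\<forall>L\<ge>0. \<forall>lam\<in>{0..L}. norm (\<integral>w. Qf c z1 z2 lam lam w \<partial>lborel) \<le> CQ c L * integral\<^sup>L lborel gg)"
proof (intro conjI ballI allI impI)
  have zb: "\<And>w. norm (z1 w) \<le> 1" "\<And>w. norm (z2 w) \<le> 1" using ad by (auto simp: admissible_def)
  have zm: "z1 \<in> borel_measurable borel" "z2 \<in> borel_measurable borel" using ad by (auto simp: admissible_def)
  have CQ0: "CQ c L \<ge> 0" if "L \<ge> 0" for L
    using c that bet_pos[OF c that] mm_pos[OF c] by (simp add: CQ_def)
  have gg0: "gg w \<ge> 0" for w by (simp add: gg_def add_pos_nonneg less_imp_le)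
  fix lam :: real assume l: "lam \<in> {0..}"
  then have l0: "lam \<ge> 0" by simp
  show "(PsiInt c z1 z2 has_vector_derivative (\<integral>w. Qf c z1 z2 lam lam w \<partial>lborel)) (at lam within {0..})"
  proof (rule vector_deriv_from_quot)
    have lim: "((\<lambda>mu. \<integral>w. Qf c z1 z2 lam mu w \<partial>lborel) \<longlongrightarrow> (\<integral>w. Qf c z1 z2 lam lam w \<partial>lborel)) (at lam within {0..})"
    proof (rule dom_conv_within[where w="\<lambda>w. CQ c (lam+1) * gg w"])
      show "\<And>t. (\<lambda>w. Qf c z1 z2 lam t w) \<in> borel_measurable lborel" "(\<lambda>w. Qf c z1 z2 lam lam w) \<in> borel_measurable lborel"
        using meas_Qf[OF zm] by auto
      show "integrable lborel (\<lambda>w. CQ c (lam + 1) * gg w)" by (rule integrable_gg)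
      show "\<forall>\<^sub>F t in at lam within {0..}. \<forall>w. norm (Qf c z1 z2 lam t w) \<le> CQ c (lam + 1) * gg w"
        using ev_within[of lam]
      proof eventually_elim
        case (elim mu)
        then show ?case using Q_bound[OF c zb(1) zb(2), of lam "lam+1" mu] l0 by (auto simp: gg_def)
      qed
      show "((\<lambda>t. Qf c z1 z2 lam t w) \<longlongrightarrow> Qf c z1 z2 lam lam w) (at lam within {0..})" for w
        by (rule tendsto_Qf[OF c zb(2) tendsto_const tendsto_ident_at l0 l0])
    qed
    show "((\<lambda>y. (PsiInt c z1 z2 y - PsiInt c z1 z2 lam) / complex_of_real (y - lam)) \<longlongrightarrow> (\<integral>w. Qf c z1 z2 lam lam w \<partial>lborel)) (at lam within {0..})"
    proof (rule Lim_transform_eventually[OF lim])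
      show "\<forall>\<^sub>F mu in at lam within {0..}. (\<integral>w. Qf c z1 z2 lam mu w \<partial>lborel) = (PsiInt c z1 z2 mu - PsiInt c z1 z2 lam) / complex_of_real (mu - lam)"
        using ev_within[of lam]
      proof eventually_elim
        case (elim mu)
        have "(PsiInt c z1 z2 mu - PsiInt c z1 z2 lam) / complex_of_real (mu - lam) =
            (\<integral>w. (Psi c z1 z2 mu w - Psi c z1 z2 lam w) / complex_of_real (mu - lam) \<partial>lborel)"
          unfolding PsiInt_def integral_divide_zero
          using Bochner_Integration.integral_diff[OF integrable_Psi[OF c ad, of mu] integrable_Psi[OF c ad l0]] elim by simp
        also have "\<dots> = (\<integral>w. Qf c z1 z2 lam mu w \<partial>lborel)"
          by (rule Bochner_Integration.integral_cong[OF refl]) (use quot_eq[OF c l0] elim zb in auto)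
        finally show ?case by simp
      qed
    qed
  qed
next
  have zb: "\<And>w. norm (z1 w) \<le> 1" "\<And>w. norm (z2 w) \<le> 1" using ad by (auto simp: admissible_def)
  have zm: "z1 \<in> borel_measurable borel" "z2 \<in> borel_measurable borel" using ad by (auto simp: admissible_def)
  show "continuous_on {0..} (\<lambda>lam. \<integral>w. Qf c z1 z2 lam lam w \<partial>lborel)"
    unfolding continuous_on_def
  proof
    fix lam :: real assume "lam \<in> {0..}"
    then have l0: "lam \<ge> 0" by simp
    show "((\<lambda>mu. \<integral>w. Qf c z1 z2 mu mu w \<partial>lborel) \<longlongrightarrow> (\<integral>w. Qf c z1 z2 lam lam w \<partial>lborel)) (at lam within {0..})"
    proof (rule dom_conv_within[where w="\<lambda>w. CQ c (lam+1) * gg w"])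
      show "\<And>t. (\<lambda>w. Qf c z1 z2 t t w) \<in> borel_measurable lborel" "(\<lambda>w. Qf c z1 z2 lam lam w) \<in> borel_measurable lborel"
        using meas_Qf[OF zm] by auto
      show "integrable lborel (\<lambda>w. CQ c (lam + 1) * gg w)" by (rule integrable_gg)
      show "\<forall>\<^sub>F t in at lam within {0..}. \<forall>w. norm (Qf c z1 z2 t t w) \<le> CQ c (lam + 1) * gg w"
        using ev_within[of lam]
      proof eventually_elim
        case (elim mu)
        then show ?case using Q_bound[OF c zb(1) zb(2), of mu "lam+1" mu] l0 by (auto simp: gg_def)
      qed
      show "((\<lambda>t. Qf c z1 z2 t t w) \<longlongrightarrow> Qf c z1 z2 lam lam w) (at lam within {0..})" for w
        by (rule tendsto_Qf[OF c zb(2) tendsto_ident_at tendsto_ident_at l0 l0])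
    qed
  qed
next
  have zb: "\<And>w. norm (z1 w) \<le> 1" "\<And>w. norm (z2 w) \<le> 1" using ad by (auto simp: admissible_def)
  have zm: "z1 \<in> borel_measurable borel" "z2 \<in> borel_measurable borel" using ad by (auto simp: admissible_def)
  fix L lam :: real assume L: "L \<ge> 0" and l: "lam \<in> {0..L}"
  have "norm (\<integral>w. Qf c z1 z2 lam lam w \<partial>lborel) \<le> (\<integral>w. CQ c L * gg w \<partial>lborel)"
  proof (rule Bochner_Integration.integral_norm_bound_integral)
    show "integrable lborel (\<lambda>w. CQ c L * gg w)" by (rule integrable_gg)
    have CQ0: "CQ c L \<ge> 0" using c L bet_pos[OF c L] mm_pos[OF c] by (simp add: CQ_def)
    show "integrable lborel (\<lambda>w. Qf c z1 z2 lam lam w)"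
    proof (rule Bochner_Integration.integrable_bound[OF integrable_gg[of "CQ c L"]])
      show "(\<lambda>w. Qf c z1 z2 lam lam w) \<in> borel_measurable lborel" using meas_Qf[OF zm] by auto
      show "AE w in lborel. norm (Qf c z1 z2 lam lam w) \<le> norm (CQ c L * gg w)"
        using Q_bound[OF c zb(1) zb(2), of lam L lam] l CQ0
        by (auto simp: gg_def abs_mult)
    qed
    show "norm (Qf c z1 z2 lam lam w) \<le> CQ c L * gg w" for w
      using Q_bound[OF c zb(1) zb(2), of lam L lam] l by (auto simp: gg_def)
  qed
  also have "\<dots> = CQ c L * integral\<^sup>L lborel gg" by simp
  finally show "norm (\<integral>w. Qf c z1 z2 lam lam w \<partial>lborel) \<le> CQ c L * integral\<^sup>L lborel gg" .
qed

lemma gg_nonneg: "0 \<le> gg w" by (simp add: gg_def add_pos_nonneg less_imp_le)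

lemma meas_gg[measurable]: "gg \<in> borel_measurable borel"
  unfolding gg_def by measurable

lemma tailT1:
  assumes W: "W > 0"
  shows "(\<integral>\<^sup>+x. ennreal (1 / x^2) * indicator {W..} x \<partial>lborel) = ennreal (1 / W)"
proof -
  have "(\<integral>\<^sup>+x. ennreal (1 / x^2) * indicator {W..} x \<partial>lborel) = ennreal (0 - (- 1 / W))"
  proof (rule nn_integral_FTC_atLeast)
    show "(\<lambda>x::real. 1 / x^2) \<in> borel_measurable borel" by measurable
    show "((\<lambda>x. - 1 / x) has_real_derivative 1 / x^2) (at x)" if "W \<le> x" for x
    proof -
      have "x \<noteq> 0" using that W by auto
      then show ?thesis by (auto intro!: derivative_eq_intros simp: power2_eq_square)
    qed
    show "0 \<le> 1 / x^2" for x :: real by simp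
    show "((\<lambda>x::real. - 1 / x) \<longlongrightarrow> 0) at_top"
      by (rule tendsto_divide_0[OF tendsto_const]) (rule filterlim_at_top_imp_at_infinity[OF filterlim_ident])
  qed
  then show ?thesis by simp
qed

lemma tailT2:
  assumes W: "W > 0"
  shows "(\<integral>\<^sup>+x. ennreal (gg x) * indicator {W..} x \<partial>lborel) \<le> ennreal (1 / W)"
proof -
  have "(\<integral>\<^sup>+x. ennreal (gg x) * indicator {W..} x \<partial>lborel) \<le> (\<integral>\<^sup>+x. ennreal (1 / x^2) * indicator {W..} x \<partial>lborel)"
  proof (rule nn_integral_mono)
    fix x :: real
    show "ennreal (gg x) * indicator {W..} x \<le> ennreal (1 / x^2) * indicator {W..} x"
    proof (cases "W \<le> x")
      case True
      then have "x^2 > 0" using W by simp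
      then have "gg x \<le> 1 / x^2" unfolding gg_def by (simp add: inverse_eq_divide frac_le)
      then show ?thesis using True by (simp add: ennreal_leI)
    qed simp
  qed
  then show ?thesis using tailT1[OF W] by simp
qed

lemma tailT3:
  "(\<integral>\<^sup>+x. ennreal (gg x) * indicator {..-W} x \<partial>lborel) = (\<integral>\<^sup>+x. ennreal (gg x) * indicator {W..} x \<partial>lborel)"
proof -
  have "(\<integral>\<^sup>+x. ennreal (gg x) * indicator {..-W} x \<partial>lborel) =
     ennreal \<bar>-1\<bar> * (\<integral>\<^sup>+x. ennreal (gg (0 + -1 * x)) * indicator {..-W} (0 + -1 * x) \<partial>lborel)"
    by (rule nn_integral_real_affine) auto
  also have "\<dots> = (\<integral>\<^sup>+x. ennreal (gg x) * indicator {W..} x \<partial>lborel)"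
  proof -
    have "\<And>x. ennreal (gg (0 + -1 * x)) * indicator {..-W} (0 + -1 * x) = ennreal (gg x) * indicator {W..} x"
      by (auto simp: gg_def split: split_indicator)
    then show ?thesis by (simp only: abs_minus_cancel abs_one ennreal_1 mult_1)
  qed
  finally show ?thesis .
qed

lemma tail:
  assumes W: "W > 0"
  shows "(\<integral>w. indicator {w. W < \<bar>w\<bar>} w * gg w \<partial>lborel) \<le> 2 / W"
proof -
  have "(\<integral>\<^sup>+x. ennreal (indicator {w. W < \<bar>w\<bar>} x * gg x) \<partial>lborel)
     \<le> (\<integral>\<^sup>+x. ennreal (gg x) * indicator {W..} x + ennreal (gg x) * indicator {..-W} x \<partial>lborel)"
    by (intro nn_integral_mono) (auto split: split_indicator)
  also have "\<dots> = (\<integral>\<^sup>+x. ennreal (gg x) * indicator {W..} x \<partial>lborel) + (\<integral>\<^sup>+x. ennreal (gg x) * indicator {..-W} x \<partial>lborel)"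
    by (rule nn_integral_add) auto
  also have "\<dots> \<le> ennreal (1/W) + ennreal (1/W)"
    unfolding tailT3 using tailT2[OF W] by (intro add_mono) auto
  also have "\<dots> = ennreal (2 / W)" using W by (simp flip: ennreal_plus)
  finally have le: "(\<integral>\<^sup>+x. ennreal (indicator {w. W < \<bar>w\<bar>} x * gg x) \<partial>lborel) \<le> ennreal (2 / W)" .
  have "(\<integral>w. indicator {w. W < \<bar>w\<bar>} w * gg w \<partial>lborel) = enn2real (\<integral>\<^sup>+x. ennreal (indicator {w. W < \<bar>w\<bar>} x * gg x) \<partial>lborel)"
    by (rule integral_eq_nn_integral) (auto simp: gg_nonneg)
  also have "\<dots> \<le> 2 / W" using le W by (intro enn2real_leI) auto
  finally show ?thesis .
qed

lemma diff_int:
  assumes c: "c > 0" and az: "admissible z1 z2" and ay: "admissible y1 y2" and l: "0 \<le> lam"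
    and h: "integrable lborel h" and hb: "\<And>w. norm (Psi c z1 z2 lam w - Psi c y1 y2 lam w) \<le> h w"
  shows "norm (PsiInt c z1 z2 lam - PsiInt c y1 y2 lam) \<le> integral\<^sup>L lborel h"
proof -
  have "PsiInt c z1 z2 lam - PsiInt c y1 y2 lam = (\<integral>w. Psi c z1 z2 lam w - Psi c y1 y2 lam w \<partial>lborel)"
    unfolding PsiInt_def
    by (rule Bochner_Integration.integral_diff[symmetric]) (use integrable_Psi[OF c az l] integrable_Psi[OF c ay l] in auto)
  also have "norm \<dots> \<le> integral\<^sup>L lborel h"
    by (rule Bochner_Integration.integral_norm_bound_integral)
       (use integrable_Psi[OF c az l] integrable_Psi[OF c ay l] h hb in auto)
  finally show ?thesis .
qed

lemma SUP_bound:
  fixes f :: "real \<Rightarrow> complex"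
  assumes "\<And>w. norm (f w) \<le> 1" "\<And>w. norm (g w) \<le> 1" "w \<in> A"
  shows "norm (f w - g w) \<le> (SUP w\<in>A. norm (f w - g w))"
proof (rule cSUP_upper[OF assms(3)])
  have "norm (f w - g w) \<le> 2" for w
    using norm_triangle_ineq4[of "f w" "g w"] assms(1,2)[of w] by linarith
  then show "bdd_above ((\<lambda>w. norm (f w - g w)) ` A)" by (intro bdd_aboveI[where M=2]) auto
qed

lemma SUP_nonneg:
  fixes f :: "real \<Rightarrow> complex"
  assumes "\<And>w. norm (f w) \<le> 1" "\<And>w. norm (g w) \<le> 1" "w \<in> A"
  shows "0 \<le> (SUP w\<in>A. norm (f w - g w))"
  using SUP_bound[of f g w A, OF assms] norm_ge_zero[of "f w - g w"] by linarith

lemma part2W: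
  assumes c: "c > 0" and L: "L \<ge> 0" and az: "admissible z1 z2" and ay: "admissible y1 y2"
    and l: "lam \<in> {0..L}" and W: "W > 0"
  shows "norm (PsiInt c z1 z2 lam - PsiInt c y1 y2 lam)
     \<le> max (SUP w\<in>{-W..W}. norm (z1 w - y1 w)) (SUP w\<in>{-W..W}. norm (z2 w - y2 w)) * CD c L * integral\<^sup>L lborel gg
       + 2 * CP c L * (2 / W)"
proof -
  let ?D = "max (SUP w\<in>{-W..W}. norm (z1 w - y1 w)) (SUP w\<in>{-W..W}. norm (z2 w - y2 w))"
  let ?A = "{w::real. W < \<bar>w\<bar>}"
  have zb: "\<And>w. norm (z1 w) \<le> 1" "\<And>w. norm (z2 w) \<le> 1" using az by (auto simp: admissible_def)
  have yb: "\<And>w. norm (y1 w) \<le> 1" "\<And>w. norm (y2 w) \<le> 1" using ay by (auto simp: admissible_def)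
  have l0: "0 \<le> lam" "lam \<le> L" using l by auto
  have D0: "0 \<le> ?D" using SUP_nonneg[of z1 y1 0 "{-W..W}", OF zb(1) yb(1)] W by (auto simp: le_max_iff_disj)
  have CD0: "CD c L \<ge> 0" using c L bet_pos[OF c L] mm_pos[OF c] by (simp add: CD_def)
  have CP0: "CP c L \<ge> 0" using c L bet_pos[OF c L] mm_pos[OF c] by (simp add: CP_def)
  have Aset: "?A \<in> sets lborel" by measurable
  have intA: "integrable lborel (\<lambda>w. indicator ?A w * gg w)"
    using integrable_mult_indicator[OF Aset integrable_g] by (simp add: gg_def)
  have intgg: "integrable lborel gg" using integrable_g by (simp add: gg_def[abs_def])
  let ?h = "\<lambda>w. ?D * CD c L * gg w + 2 * CP c L * (indicator ?A w * gg w)"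
  have "norm (PsiInt c z1 z2 lam - PsiInt c y1 y2 lam) \<le> integral\<^sup>L lborel ?h"
  proof (rule diff_int[OF c az ay l0(1)])
    show "integrable lborel ?h" using intA intgg by auto
    fix w
    show "norm (Psi c z1 z2 lam w - Psi c y1 y2 lam w) \<le> ?h w"
    proof (cases "w \<in> ?A")
      case False
      then have "w \<in> {-W..W}" by auto
      then have "norm (z1 w - y1 w) \<le> ?D" "norm (z2 w - y2 w) \<le> ?D"
        using SUP_bound[of z1 y1 w, OF zb(1) yb(1)] SUP_bound[of z2 y2 w, OF zb(2) yb(2)] by (auto simp: le_max_iff_disj)
      then have "norm (Psi c z1 z2 lam w - Psi c y1 y2 lam w) \<le> ?D * CD c L * inverse (1 + w^2)"
        by (intro Psi_diff_bound[OF c zb(1) zb(2) yb(1) yb(2) l0])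
      moreover have "indicator ?A w = (0::real)" using False by simp
      ultimately show ?thesis by (simp add: gg_def)
    next
      case True
      have "norm (Psi c z1 z2 lam w - Psi c y1 y2 lam w) \<le> norm (Psi c z1 z2 lam w) + norm (Psi c y1 y2 lam w)"
        by (rule norm_triangle_ineq4)
      also have "\<dots> \<le> CP c L * gg w + CP c L * gg w"
        using Psi_bound[OF c zb(1) zb(2) l0] Psi_bound[OF c yb(1) yb(2) l0] by (intro add_mono) (auto simp: gg_def)
      finally have "norm (Psi c z1 z2 lam w - Psi c y1 y2 lam w) \<le> 2 * CP c L * (indicator ?A w * gg w)"
        using True by (simp add: ac_simps)
      moreover have "0 \<le> ?D * CD c L * gg w" using D0 CD0 gg_nonneg by simp
      ultimately show ?thesis by linarith
    qed
  qed
  also have "integral\<^sup>L lborel ?h = ?D * CD c L * integral\<^sup>L lborel gg + 2 * CP c L * (\<integral>w. indicator ?A w * gg w \<partial>lborel)"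
    using intA intgg by simp
  also have "\<dots> \<le> ?D * CD c L * integral\<^sup>L lborel gg + 2 * CP c L * (2 / W)"
    using tail[OF W] CP0 by (intro add_left_mono mult_left_mono) auto
  finally show ?thesis .
qed

lemma part2inf:
  assumes c: "c > 0" and L: "L \<ge> 0" and az: "admissible z1 z2" and ay: "admissible y1 y2"
    and l: "lam \<in> {0..L}"
  shows "norm (PsiInt c z1 z2 lam - PsiInt c y1 y2 lam)
     \<le> max (SUP w. norm (z1 w - y1 w)) (SUP w. norm (z2 w - y2 w)) * CD c L * integral\<^sup>L lborel gg"
proof -
  let ?D = "max (SUP w. norm (z1 w - y1 w)) (SUP w. norm (z2 w - y2 w))"
  have zb: "\<And>w. norm (z1 w) \<le> 1" "\<And>w. norm (z2 w) \<le> 1" using az by (auto simp: admissible_def)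
  have yb: "\<And>w. norm (y1 w) \<le> 1" "\<And>w. norm (y2 w) \<le> 1" using ay by (auto simp: admissible_def)
  have l0: "0 \<le> lam" "lam \<le> L" using l by auto
  have intgg: "integrable lborel gg" using integrable_g by (simp add: gg_def[abs_def])
  let ?h = "\<lambda>w. ?D * CD c L * gg w"
  have "norm (PsiInt c z1 z2 lam - PsiInt c y1 y2 lam) \<le> integral\<^sup>L lborel ?h"
  proof (rule diff_int[OF c az ay l0(1)])
    show "integrable lborel ?h" using intgg by auto
    fix w
    have "norm (z1 w - y1 w) \<le> ?D" "norm (z2 w - y2 w) \<le> ?D"
      using SUP_bound[of z1 y1 w UNIV, OF zb(1) yb(1)] SUP_bound[of z2 y2 w UNIV, OF zb(2) yb(2)] by (auto simp: le_max_iff_disj)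
    then show "norm (Psi c z1 z2 lam w - Psi c y1 y2 lam w) \<le> ?h w"
      using Psi_diff_bound[OF c zb(1) zb(2) yb(1) yb(2) l0] by (simp add: gg_def)
  qed
  also have "integral\<^sup>L lborel ?h = ?D * CD c L * integral\<^sup>L lborel gg" by simp
  finally show ?thesis .
qed

theorem lemma1:
  fixes c \<eta>0 :: real
  assumes "c > 0" and "\<eta>0 > 0"
  shows "(\<exists>B. \<forall>z1 z2. admissible z1 z2 \<longrightarrow>
            (\<exists>F'. (\<forall>lam\<in>{0..}. (PsiInt c z1 z2 has_vector_derivative F' lam) (at lam within {0..}))
                 \<and> continuous_on {0..} F'
                 \<and> (\<forall>lam\<in>{0..\<eta>0}. norm (F' lam) \<le> B)))
       \<and> (\<exists>K>0. \<forall>z1 z2 y1 y2. admissible z1 z2 \<longrightarrow> admissible y1 y2 \<longrightarrow>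
            (\<forall>W::real. W \<ge> 1 \<longrightarrow>
               (\<forall>lam\<in>{0..\<eta>0}. norm (PsiInt c z1 z2 lam - PsiInt c y1 y2 lam)
                  \<le> K * (max (SUP w\<in>{-W..W}. norm (z1 w - y1 w))
                              (SUP w\<in>{-W..W}. norm (z2 w - y2 w)) + 1 / W)))
            \<and> (\<forall>lam\<in>{0..\<eta>0}. norm (PsiInt c z1 z2 lam - PsiInt c y1 y2 lam)
                  \<le> K * max (SUP w. norm (z1 w - y1 w)) (SUP w. norm (z2 w - y2 w))))"
proof -
  have c: "c > 0" and e: "\<eta>0 \<ge> 0" using assms by auto
  define I where "I = integral\<^sup>L lborel gg"
  have I0: "I \<ge> 0" unfolding I_def by (rule Bochner_Integration.integral_nonneg) (simp add: gg_nonneg)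
  have CD0: "CD c \<eta>0 \<ge> 0" using c e bet_pos[OF c e] mm_pos[OF c] by (simp add: CD_def)
  have CP0: "CP c \<eta>0 \<ge> 0" using c e bet_pos[OF c e] mm_pos[OF c] by (simp add: CP_def)
  have P1: "\<exists>B. \<forall>z1 z2. admissible z1 z2 \<longrightarrow>
            (\<exists>F'. (\<forall>lam\<in>{0..}. (PsiInt c z1 z2 has_vector_derivative F' lam) (at lam within {0..}))
                 \<and> continuous_on {0..} F'
                 \<and> (\<forall>lam\<in>{0..\<eta>0}. norm (F' lam) \<le> B))"
  proof (rule exI[where x="CQ c \<eta>0 * integral\<^sup>L lborel gg"], intro allI impI)
    fix z1 z2 assume ad: "admissible z1 z2"
    show "\<exists>F'. (\<forall>lam\<in>{0..}. (PsiInt c z1 z2 has_vector_derivative F' lam) (at lam within {0..}))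
                 \<and> continuous_on {0..} F'
                 \<and> (\<forall>lam\<in>{0..\<eta>0}. norm (F' lam) \<le> CQ c \<eta>0 * integral\<^sup>L lborel gg)"
      apply (rule exI[where x="\<lambda>lam. \<integral>w. Qf c z1 z2 lam lam w \<partial>lborel"])
      using part1[OF c ad] e by auto
  qed
  define K where "K = CD c \<eta>0 * I + 4 * CP c \<eta>0 + 1"
  have K0: "K > 0" unfolding K_def using CD0 CP0 I0 by (simp add: add_nonneg_pos)
  have K1: "CD c \<eta>0 * I \<le> K" and K2: "4 * CP c \<eta>0 \<le> K"
    unfolding K_def using CD0 CP0 I0 by auto
  have P2: "\<forall>z1 z2 y1 y2. admissible z1 z2 \<longrightarrow> admissible y1 y2 \<longrightarrow>
            (\<forall>W::real. W \<ge> 1 \<longrightarrow>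
               (\<forall>lam\<in>{0..\<eta>0}. norm (PsiInt c z1 z2 lam - PsiInt c y1 y2 lam)
                  \<le> K * (max (SUP w\<in>{-W..W}. norm (z1 w - y1 w))
                              (SUP w\<in>{-W..W}. norm (z2 w - y2 w)) + 1 / W)))
            \<and> (\<forall>lam\<in>{0..\<eta>0}. norm (PsiInt c z1 z2 lam - PsiInt c y1 y2 lam)
                  \<le> K * max (SUP w. norm (z1 w - y1 w)) (SUP w. norm (z2 w - y2 w)))"
  proof (intro allI impI conjI ballI)
    fix z1 z2 y1 y2 assume az: "admissible z1 z2" and ay: "admissible y1 y2"
    have zb: "\<And>w. norm (z1 w) \<le> 1" using az by (auto simp: admissible_def)
    have yb: "\<And>w. norm (y1 w) \<le> 1" using ay by (auto simp: admissible_def)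
    fix W :: real and lam assume W: "W \<ge> 1" and l: "lam \<in> {0..\<eta>0}"
    let ?D = "max (SUP w\<in>{-W..W}. norm (z1 w - y1 w)) (SUP w\<in>{-W..W}. norm (z2 w - y2 w))"
    have D0: "0 \<le> ?D" using SUP_nonneg[of z1 y1 0 "{-W..W}", OF zb yb] W by (auto simp: le_max_iff_disj)
    have "norm (PsiInt c z1 z2 lam - PsiInt c y1 y2 lam) \<le> ?D * CD c \<eta>0 * I + 2 * CP c \<eta>0 * (2 / W)"
      using part2W[OF c e az ay l] W unfolding I_def by simp
    also have "\<dots> = ?D * (CD c \<eta>0 * I) + (4 * CP c \<eta>0) * (1 / W)" by (simp add: ac_simps)
    also have "\<dots> \<le> ?D * K + K * (1 / W)"
      using K1 K2 D0 W by (intro add_mono mult_left_mono mult_right_mono) auto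
    also have "\<dots> = K * (?D + 1 / W)" by (simp add: algebra_simps)
    finally show "norm (PsiInt c z1 z2 lam - PsiInt c y1 y2 lam) \<le> K * (?D + 1 / W)" .
  next
    fix z1 z2 y1 y2 assume az: "admissible z1 z2" and ay: "admissible y1 y2"
    have zb: "\<And>w. norm (z1 w) \<le> 1" using az by (auto simp: admissible_def)
    have yb: "\<And>w. norm (y1 w) \<le> 1" using ay by (auto simp: admissible_def)
    fix lam assume l: "lam \<in> {0..\<eta>0}"
    let ?D = "max (SUP w. norm (z1 w - y1 w)) (SUP w. norm (z2 w - y2 w))"
    have D0: "0 \<le> ?D" using SUP_nonneg[of z1 y1 0 UNIV, OF zb yb] by (auto simp: le_max_iff_disj)
    have "norm (PsiInt c z1 z2 lam - PsiInt c y1 y2 lam) \<le> ?D * CD c \<eta>0 * I"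
      using part2inf[OF c e az ay l] unfolding I_def by simp
    also have "\<dots> = ?D * (CD c \<eta>0 * I)" by (simp add: ac_simps)
    also have "\<dots> \<le> ?D * K" using K1 D0 by (intro mult_left_mono) auto
    finally show "norm (PsiInt c z1 z2 lam - PsiInt c y1 y2 lam) \<le> K * ?D" by (simp add: ac_simps)
  qed
  show ?thesis using P1 P2 K0 by blast
qed

end
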